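(* Let $\mathcal{F}\subseteq\mathcal{P}(\omega)$ be compact, hereditary and covering $\omega$. Then $\lVert\cdot\rVert^{\mathcal{F}}\colon\mathbb{R}^\omega\to[0,\infty]$ is a nice quasi-norm; in particular it is lower semicontinuous: $\lim_{n\to\infty}\lVert P_n(x)\rVert^{\mathcal{F}}=\lVert x\rVert^{\mathcal{F}}$ for every $x\in\mathbb{R}^\omega$ (allowing the value $\infty$).
   Context: $\omega=\{1,2,3,\dots\}$. Subsets of $\omega$ are identified with elements of $2^\omega$ (product topology); $\mathcal{F}$ is compact if compact in $2^\omega$, hereditary if closed under taking subsets, and covers $\omega$ if $\bigcup\mathcal{F}=\omega$. A partition is a family $\mathcal{P}\subseteq\mathcal{P}(\omega)$ with $\emptyset\in\mathcal{P}$, $\bigcup\mathcal{P}=\omega$, elements pairwise disjoint; $\mathbb{P}_\mathcal{F}$ is the set of partitions contained in $\mathcal{F}$. For $x\in\mathbb{R}^\omega$, $\lVert x\rVert^{\mathcal{F}}=\inf_{\mathcal{P}\in\mathbb{P}_\mathcal{F}}\sum_{F\in\mathcal{P}}\sup_{k\in F}|x(k)|\in[0,\infty]$ (with $\sup_{k\in\emptyset}=0$). For $A\subseteq\omega$, $P_A(x)$ is the sequence equal to $x(k)$ for $k\in A$ and $0$ otherwise; $P_n=P_{\{1,\dots,n\}}$. A function $\varphi\colon\mathbb{R}^\omega\to[0,\infty]$ is nice if (i) $\varphi(x)<\infty$ for all finitely supported $x$; (ii) $|x(n)|\le|y(n)|$ for all $n$ implies $\varphi(x)\le\varphi(y)$;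 (iii) $\lim_n\varphi(P_n(x))=\varphi(x)$ for every $x$. A (possibly extended) quasi-norm satisfies $\lVert x\rVert=0\iff x=0$, $\lVert\lambda x\rVert=|\lambda|\lVert x\rVert$, and $\lVert x+y\rVert\le c(\lVert x\rVert+\lVert y\rVert)$ for some constant $c\ge1$. *)

theory Defs
  imports "HOL-Analysis.Analysis"
begin

(* omega = {1,2,3,...} is represented by the type nat (index k+1 of the paper is index k here).
   Subsets of omega are nat sets; a set is identified with its characteristic function in 2^omega,
   carrying the product of discrete topologies on bool. *)

definition char_fun :: "nat set \<Rightarrow> (nat \<Rightarrow> bool)" where
  "char_fun A = (\<lambda>n. n \<in> A)"

definition cantor_top :: "(nat \<Rightarrow> bool) topology" where
  "cantor_top = product_topology (\<lambda>_. discrete_topology (UNIV :: bool set)) UNIV"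

definition compact_family :: "nat set set \<Rightarrow> bool" where
  "compact_family \<F> \<longleftrightarrow> compactin cantor_top (char_fun ` \<F>)"

definition hereditary :: "nat set set \<Rightarrow> bool" where
  "hereditary \<F> \<longleftrightarrow> (\<forall>A\<in>\<F>. \<forall>B. B \<subseteq> A \<longrightarrow> B \<in> \<F>)"

definition covers :: "nat set set \<Rightarrow> bool" where
  "covers \<F> \<longleftrightarrow> \<Union>\<F> = UNIV"

definition is_partition :: "nat set set \<Rightarrow> bool" where
  "is_partition \<P> \<longleftrightarrow> {} \<in> \<P> \<and> \<Union>\<P> = UNIV \<and>
     (\<forall>A\<in>\<P>. \<forall>B\<in>\<P>. A \<noteq> B \<longrightarrow> A \<inter> B = {})"

definition partitions_in :: "nat set set \<Rightarrow> nat set set set" where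
  "partitions_in \<F> = {\<P>. is_partition \<P> \<and> \<P> \<subseteq> \<F>}"

(* ||x||^F with values in [0,infinity] = ennreal; sup over the empty set is 0 = bot *)
definition Fnorm :: "nat set set \<Rightarrow> (nat \<Rightarrow> real) \<Rightarrow> ennreal" where
  "Fnorm \<F> x = (INF \<P>\<in>partitions_in \<F>. \<Sum>\<^sub>\<infinity>A\<in>\<P>. (SUP k\<in>A. ennreal \<bar>x k\<bar>))"

definition proj :: "nat set \<Rightarrow> (nat \<Rightarrow> real) \<Rightarrow> (nat \<Rightarrow> real)" where
  "proj A x = (\<lambda>k. if k \<in> A then x k else 0)"

definition projn :: "nat \<Rightarrow> (nat \<Rightarrow> real) \<Rightarrow> (nat \<Rightarrow> real)" where
  "projn n = proj {..<n}"

definition nice :: "((nat \<Rightarrow> real) \<Rightarrow> ennreal) \<Rightarrow> bool" where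
  "nice \<phi> \<longleftrightarrow>
     (\<forall>x. finite {k. x k \<noteq> 0} \<longrightarrow> \<phi> x < \<infinity>) \<and>
     (\<forall>x y. (\<forall>n. \<bar>x n\<bar> \<le> \<bar>y n\<bar>) \<longrightarrow> \<phi> x \<le> \<phi> y) \<and>
     (\<forall>x. (\<lambda>n. \<phi> (projn n x)) \<longlonglongrightarrow> \<phi> x)"

definition ext_quasi_norm :: "((nat \<Rightarrow> real) \<Rightarrow> ennreal) \<Rightarrow> bool" where
  "ext_quasi_norm \<phi> \<longleftrightarrow>
     (\<forall>x. \<phi> x = 0 \<longleftrightarrow> x = (\<lambda>_. 0)) \<and>
     (\<forall>(l::real) x. \<phi> (\<lambda>k. l * x k) = ennreal \<bar>l\<bar> * \<phi> x) \<and>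
     (\<exists>c::real. c \<ge> 1 \<and> (\<forall>x y. \<phi> (\<lambda>k. x k + y k) \<le> ennreal c * (\<phi> x + \<phi> y)))"

end

theory Submission imports Defs "HOL-Library.Diagonal_Subsequence" begin


lemma closed_F:
  assumes cF: "compact_family F" and lim: "\<And>m. C \<inter> {..<m} \<in> F"
  shows "C \<in> F"
proof -
  have H: "Hausdorff_space cantor_top"
    unfolding cantor_top_def by (simp add: Hausdorff_space_product_topology)
  have cl: "closedin cantor_top (char_fun ` F)"
    using compactin_imp_closedin[OF H] cF unfolding compact_family_def by blast
  have "limitin cantor_top (\<lambda>m. char_fun (C \<inter> {..<m})) (char_fun C) sequentially"
    unfolding cantor_top_def limitin_componentwise
  proof (intro conjI ballI)
    fix i :: nat
    show "limitin (discrete_topology UNIV) (\<lambda>c. char_fun (C \<inter> {..<c}) i) (char_fun C i) sequentially"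
      by (rule limitin_eventually) (auto simp: char_fun_def eventually_sequentially intro!: exI[of _ "Suc i"])
  qed auto
  then have "char_fun C \<in> char_fun ` F"
    by (rule limitin_closedin[OF _ cl]) (auto simp: lim)
  moreover have "inj char_fun" unfolding inj_def char_fun_def by (simp add: fun_eq_iff set_eq_iff)
  ultimately show ?thesis by (auto dest: injD)
qed



definition cost :: "(nat \<Rightarrow> real) \<Rightarrow> nat set set \<Rightarrow> ennreal" where
  "cost x P = (\<Sum>\<^sub>\<infinity>A\<in>P. (SUP k\<in>A. ennreal \<bar>x k\<bar>))"

lemma Fnorm_cost: "Fnorm F x = (INF P\<in>partitions_in F. cost x P)"
  by (simp add: Fnorm_def cost_def)

lemma infsum_ennreal_SUP:
  "infsum (f::'a \<Rightarrow> ennreal) A = (SUP G\<in>{G. finite G \<and> G \<subseteq> A}. sum f G)"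
  by (rule nonneg_infsum_complete) simp

lemma infsum_le_ennreal:
  assumes "\<And>G. finite G \<Longrightarrow> G \<subseteq> A \<Longrightarrow> sum f G \<le> (c::ennreal)"
  shows "infsum f A \<le> c"
  unfolding infsum_ennreal_SUP using assms by (auto intro!: SUP_least)

lemma sum_le_infsum_ennreal:
  assumes "finite G" "G \<subseteq> A"
  shows "sum (f::'a \<Rightarrow> ennreal) G \<le> infsum f A"
  unfolding infsum_ennreal_SUP using assms by (auto intro!: SUP_upper)

lemma infsum_mono_ennreal:
  assumes "\<And>a. a \<in> A \<Longrightarrow> f a \<le> (g a::ennreal)"
  shows "infsum f A \<le> infsum g A"
  by (rule infsum_mono) (auto intro: assms nonneg_summable_on_complete)

lemma infsum_image_le_ennreal:
  "infsum (g::'b \<Rightarrow> ennreal) (h ` A) \<le> infsum (g \<circ> h) A"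
proof (rule infsum_le_ennreal)
  fix G assume G: "finite G" "G \<subseteq> h ` A"
  then obtain K where K: "K \<subseteq> A" "finite K" "G = h ` K"
    by (meson finite_subset_image)
  have "sum g G \<le> sum (g \<circ> h) K"
    using K sum_image_le[of K g h] by (simp add: o_def)
  also have "\<dots> \<le> infsum (g \<circ> h) A" using K by (intro sum_le_infsum_ennreal) auto
  finally show "sum g G \<le> infsum (g \<circ> h) A" .
qed

definition S0 :: "nat set set" where "S0 = insert {} ((\<lambda>k. {k}) ` UNIV)"

lemma S0_part:
  assumes "hereditary F" "covers F"
  shows "S0 \<in> partitions_in F"
proof -
  have "{k} \<in> F" for k
  proof -
    have "k \<in> \<Union>F" using assms(2) by (simp add: covers_def)
    then obtain A where "A \<in> F" "k \<in> A" by blast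
    moreover have "{k} \<subseteq> A" using \<open>k \<in> A\<close> by simp
    ultimately show ?thesis using assms(1) unfolding hereditary_def by (meson bspec)
  qed
  moreover have "{} \<in> F" using calculation[of 0] assms(1) unfolding hereditary_def by (meson empty_subsetI)
  ultimately show ?thesis
    unfolding partitions_in_def is_partition_def S0_def by auto
qed

lemma parts_nonempty: "hereditary F \<Longrightarrow> covers F \<Longrightarrow> partitions_in F \<noteq> {}"
  using S0_part by blast

lemma cost_S0_finite:
  assumes fin: "finite {k. x k \<noteq> 0}"
  shows "cost x S0 < \<infinity>"
proof -
  let ?f = "\<lambda>A. SUP k\<in>A. ennreal \<bar>x k\<bar>"
  let ?sp = "{k. x k \<noteq> 0}"
  have "cost x S0 \<le> (\<Sum>k\<in>?sp. ennreal \<bar>x k\<bar>)"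
    unfolding cost_def
  proof (rule infsum_le_ennreal)
    fix G assume G: "finite G" "G \<subseteq> S0"
    have "G - {{}} \<subseteq> (\<lambda>k. {k}) ` UNIV" using G unfolding S0_def by auto
    then obtain K where K: "finite K" "G - {{}} = (\<lambda>k. {k}) ` K"
      using G by (metis finite_Diff finite_subset_image)
    have "sum ?f G \<le> sum ?f (insert {} (G - {{}}))"
      using G by (intro sum_mono2) auto
    also have "\<dots> = sum ?f (G - {{}})"
      using G by (subst sum.insert) (auto simp: bot_ennreal)
    also have "\<dots> = (\<Sum>k\<in>K. ennreal \<bar>x k\<bar>)"
      unfolding K(2) by (subst sum.reindex) (auto simp: inj_on_def)
    also have "\<dots> = (\<Sum>k\<in>K \<inter> ?sp. ennreal \<bar>x k\<bar>)"
      using K by (intro sum.mono_neutral_right) auto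
    also have "\<dots> \<le> (\<Sum>k\<in>?sp. ennreal \<bar>x k\<bar>)"
      using fin by (intro sum_mono2) auto
    finally show "sum ?f G \<le> (\<Sum>k\<in>?sp. ennreal \<bar>x k\<bar>)" .
  qed
  also have "\<dots> < \<infinity>" by (simp add: less_top[symmetric] ennreal_sum_eq_top)
  finally show ?thesis .
qed

lemma cost_mono:
  assumes "\<And>n. \<bar>x n\<bar> \<le> \<bar>y n\<bar>"
  shows "cost x P \<le> cost y P"
  unfolding cost_def
  by (intro infsum_mono_ennreal SUP_mono) (use assms in \<open>auto intro: ennreal_leI\<close>)

lemma Fnorm_mono:
  assumes "\<And>n. \<bar>x n\<bar> \<le> \<bar>y n\<bar>"
  shows "Fnorm F x \<le> Fnorm F y"
  unfolding Fnorm_cost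
proof (rule INF_mono)
  fix P assume "P \<in> partitions_in F"
  then show "\<exists>Q\<in>partitions_in F. cost x Q \<le> cost y P" using cost_mono[of x y P] assms by blast
qed

lemma cost_ge:
  assumes "P \<in> partitions_in F"
  shows "ennreal \<bar>x k\<bar> \<le> cost x P"
proof -
  obtain A where A: "A \<in> P" "k \<in> A" using assms unfolding partitions_in_def is_partition_def by blast
  have "ennreal \<bar>x k\<bar> \<le> (SUP k\<in>A. ennreal \<bar>x k\<bar>)" using A by (intro SUP_upper) auto
  also have "\<dots> = sum (\<lambda>A. SUP k\<in>A. ennreal \<bar>x k\<bar>) {A}" by simp
  also have "\<dots> \<le> cost x P" unfolding cost_def using A by (intro sum_le_infsum_ennreal) auto
  finally show ?thesis .
qed

lemma Fnorm_ge: "ennreal \<bar>x k\<bar> \<le> Fnorm F x"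
  unfolding Fnorm_cost by (intro INF_greatest cost_ge)

lemma SUP_zero_ennreal: "(SUP x\<in>A. (0::ennreal)) = 0"
  by (cases "A = {}") (auto simp: bot_ennreal)

lemma cost_zero: "cost (\<lambda>_. 0) P = 0"
  unfolding cost_def by (simp add: SUP_zero_ennreal)

lemma Fnorm_zero: "hereditary F \<Longrightarrow> covers F \<Longrightarrow> Fnorm F (\<lambda>_. 0) = 0"
  unfolding Fnorm_cost cost_zero using parts_nonempty by simp

lemma Fnorm_zero_iff:
  assumes "hereditary F" "covers F"
  shows "Fnorm F x = 0 \<longleftrightarrow> x = (\<lambda>_. 0)"
proof
  assume "Fnorm F x = 0"
  then have "ennreal \<bar>x k\<bar> = 0" for k using Fnorm_ge[of x k F] by simp
  then show "x = (\<lambda>_. 0)" by (auto simp: fun_eq_iff)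
qed (use Fnorm_zero assms in auto)



lemma INF_cont_ennreal:
  fixes g :: "ennreal \<Rightarrow> ennreal"
  assumes "mono g" "\<And>y. isCont g y" "I \<noteq> {}"
  shows "g (INF i\<in>I. f i) = (INF i\<in>I. g (f i))"
proof -
  have "g (Inf (f`I)) = Inf (g ` f ` I)"
    by (rule continuous_at_Inf_mono) (use assms in \<open>auto intro: continuous_at_imp_continuous_within\<close>)
  then show ?thesis by (simp add: image_comp)
qed

lemma mult_INF_ennreal:
  fixes c :: ennreal
  assumes "c < top" "I \<noteq> {}"
  shows "c * (INF i\<in>I. f i) = (INF i\<in>I. c * f i)"
proof (rule INF_cont_ennreal[where g="\<lambda>t. c * t"])
  show "mono ((*) c)" by (auto simp: mono_def mult_left_mono)
  fix y show "isCont ((*) c) y" unfolding isCont_def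
    using ennreal_tendsto_cmult[OF assms(1) tendsto_ident_at] by simp
qed (use assms in auto)

lemma add_INF_ennreal:
  fixes c :: ennreal
  assumes "I \<noteq> {}"
  shows "c + (INF i\<in>I. f i) = (INF i\<in>I. c + f i)"
proof (rule INF_cont_ennreal[where g="\<lambda>t. c + t"])
  show "mono ((+) c)" by (auto simp: mono_def)
  fix y show "isCont ((+) c) y" unfolding isCont_def
    by (intro tendsto_intros)
qed (use assms in auto)

lemma le_INF_add_ennreal:
  fixes z :: ennreal
  assumes "\<And>i j. i \<in> I \<Longrightarrow> j \<in> J \<Longrightarrow> z \<le> f i + g j" "I \<noteq> {}" "J \<noteq> {}"
  shows "z \<le> (INF i\<in>I. f i) + (INF j\<in>J. g j)"
proof -
  have "(INF i\<in>I. f i) + (INF j\<in>J. g j) = (INF j\<in>J. (INF i\<in>I. f i) + g j)"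
    using add_INF_ennreal[OF assms(3)] by simp
  also have "\<dots> = (INF j\<in>J. INF i\<in>I. f i + g j)"
    using add_INF_ennreal[OF assms(2), of "g _" f] by (simp add: add.commute)
  finally show ?thesis using assms(1) by (auto intro!: INF_greatest)
qed

lemma infsum_cmult_ennreal:
  "(c::ennreal) * infsum f A = infsum (\<lambda>a. c * f a) A"
  unfolding infsum_ennreal_SUP SUP_mult_left_ennreal sum_distrib_left ..

lemma cost_scale: "cost (\<lambda>k. l * x k) P = ennreal \<bar>l\<bar> * cost x P"
proof -
  have "(SUP k\<in>A. ennreal \<bar>l * x k\<bar>) = ennreal \<bar>l\<bar> * (SUP k\<in>A. ennreal \<bar>x k\<bar>)" for A
    unfolding SUP_mult_left_ennreal by (simp add: abs_mult ennreal_mult)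
  then show ?thesis unfolding cost_def infsum_cmult_ennreal by simp
qed

lemma Fnorm_scale:
  assumes "hereditary F" "covers F"
  shows "Fnorm F (\<lambda>k. l * x k) = ennreal \<bar>l\<bar> * Fnorm F x"
  unfolding Fnorm_cost cost_scale
  by (rule mult_INF_ennreal[symmetric]) (use parts_nonempty[OF assms] in auto)

lemma infsum_Un_le_ennreal:
  "infsum (f::'a \<Rightarrow> ennreal) (A \<union> B) \<le> infsum f A + infsum f B"
proof (rule infsum_le_ennreal)
  fix G assume G: "finite G" "G \<subseteq> A \<union> B"
  have "sum f G = sum f (G \<inter> A) + sum f (G - A)"
    using G by (simp add: sum.Int_Diff)
  also have "\<dots> \<le> infsum f A + infsum f B"
    using G by (intro add_mono sum_le_infsum_ennreal) auto
  finally show "sum f G \<le> infsum f A + infsum f B" .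
qed

lemma cost_tri:
  assumes her: "hereditary F" and P: "P \<in> partitions_in F" and Q: "Q \<in> partitions_in F"
  shows "\<exists>R\<in>partitions_in F. cost (\<lambda>k. x k + y k) R \<le> 2 * cost x P + 2 * cost y Q"
proof -
  define S where "S = {k. \<bar>y k\<bar> \<le> \<bar>x k\<bar>}"
  define R where "R = (\<lambda>A. A \<inter> S) ` P \<union> (\<lambda>B. B - S) ` Q"
  have Pp: "{} \<in> P" "\<Union>P = UNIV" "\<And>A B. A \<in> P \<Longrightarrow> B \<in> P \<Longrightarrow> A \<noteq> B \<Longrightarrow> A \<inter> B = {}" "P \<subseteq> F"
    using P unfolding partitions_in_def is_partition_def by auto
  have Qp: "{} \<in> Q" "\<Union>Q = UNIV" "\<And>A B. A \<in> Q \<Longrightarrow> B \<in> Q \<Longrightarrow> A \<noteq> B \<Longrightarrow> A \<inter> B = {}" "Q \<subseteq> F"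
    using Q unfolding partitions_in_def is_partition_def by auto
  have "R \<in> partitions_in F"
    unfolding partitions_in_def is_partition_def mem_Collect_eq
  proof (intro conjI ballI impI)
    show "{} \<in> R" using Pp(1) unfolding R_def by blast
    show "\<Union>R = UNIV"
    proof (intro set_eqI iffI)
      fix k :: nat
      have "k \<in> \<Union>P" "k \<in> \<Union>Q" using Pp(2) Qp(2) by simp_all
      then obtain A B where "A \<in> P" "k \<in> A" "B \<in> Q" "k \<in> B" by blast
      then show "k \<in> \<Union>R" unfolding R_def by (cases "k \<in> S") auto
    qed simp
    show "R \<subseteq> F"
    proof
      fix C assume "C \<in> R"
      then show "C \<in> F" unfolding R_def
      proof
        assume "C \<in> (\<lambda>A. A \<inter> S) ` P"
        then obtain A where "A \<in> P" "C = A \<inter> S" by blast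
        then show ?thesis using her Pp(4) unfolding hereditary_def by blast
      next
        assume "C \<in> (\<lambda>A. A - S) ` Q"
        then obtain A where "A \<in> Q" "C = A - S" by blast
        then show ?thesis using her Qp(4) unfolding hereditary_def by blast
      qed
    qed
    fix C D assume "C \<in> R" "D \<in> R" "C \<noteq> D"
    then show "C \<inter> D = {}" unfolding R_def
    proof (elim UnE imageE)
      fix A A' assume "A \<in> P" "A' \<in> P" "C = A \<inter> S" "D = A' \<inter> S" "C \<noteq> D"
      then show ?thesis using Pp(3)[of A A'] by auto
    next
      fix A A' assume "A \<in> Q" "A' \<in> Q" "C = A - S" "D = A' - S" "C \<noteq> D"
      then show ?thesis using Qp(3)[of A A'] by auto
    qed auto
  qed
  moreover have "cost (\<lambda>k. x k + y k) R \<le> 2 * cost x P + 2 * cost y Q"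
  proof -
    let ?f = "\<lambda>A. SUP k\<in>A. ennreal \<bar>x k + y k\<bar>"
    have "cost (\<lambda>k. x k + y k) R \<le> infsum ?f ((\<lambda>A. A \<inter> S) ` P) + infsum ?f ((\<lambda>B. B - S) ` Q)"
      unfolding cost_def R_def by (rule infsum_Un_le_ennreal)
    also have "\<dots> \<le> infsum (?f \<circ> (\<lambda>A. A \<inter> S)) P + infsum (?f \<circ> (\<lambda>B. B - S)) Q"
      by (intro add_mono infsum_image_le_ennreal)
    also have "\<dots> \<le> infsum (\<lambda>A. 2 * (SUP k\<in>A. ennreal \<bar>x k\<bar>)) P + infsum (\<lambda>A. 2 * (SUP k\<in>A. ennreal \<bar>y k\<bar>)) Q"
    proof (intro add_mono infsum_mono_ennreal)
      fix A
      show "(?f \<circ> (\<lambda>A. A \<inter> S)) A \<le> 2 * (SUP k\<in>A. ennreal \<bar>x k\<bar>)"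
        unfolding o_def SUP_mult_left_ennreal
      proof (intro SUP_mono bexI)
        fix k assume k: "k \<in> A \<inter> S"
        have "ennreal \<bar>x k + y k\<bar> \<le> ennreal (2 * \<bar>x k\<bar>)"
          using k unfolding S_def by (intro ennreal_leI) auto
        then show "ennreal \<bar>x k + y k\<bar> \<le> 2 * ennreal \<bar>x k\<bar>" by (simp add: ennreal_mult)
        show "k \<in> A" using k by simp
      qed
      show "(?f \<circ> (\<lambda>A. A - S)) A \<le> 2 * (SUP k\<in>A. ennreal \<bar>y k\<bar>)"
        unfolding o_def SUP_mult_left_ennreal
      proof (intro SUP_mono bexI)
        fix k assume k: "k \<in> A - S"
        have "ennreal \<bar>x k + y k\<bar> \<le> ennreal (2 * \<bar>y k\<bar>)"
          using k unfolding S_def by (intro ennreal_leI) auto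
        then show "ennreal \<bar>x k + y k\<bar> \<le> 2 * ennreal \<bar>y k\<bar>" by (simp add: ennreal_mult)
        show "k \<in> A" using k by simp
      qed
    qed
    also have "\<dots> = 2 * cost x P + 2 * cost y Q"
      unfolding cost_def infsum_cmult_ennreal ..
    finally show ?thesis .
  qed
  ultimately show ?thesis by blast
qed

lemma Fnorm_tri:
  assumes her: "hereditary F" "covers F"
  shows "Fnorm F (\<lambda>k. x k + y k) \<le> ennreal 2 * (Fnorm F x + Fnorm F y)"
proof -
  have ne: "partitions_in F \<noteq> {}" using parts_nonempty[OF assms] .
  have "Fnorm F (\<lambda>k. x k + y k) \<le> (INF P\<in>partitions_in F. 2 * cost x P) + (INF Q\<in>partitions_in F. 2 * cost y Q)"
  proof (rule le_INF_add_ennreal[OF _ ne ne])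
    fix P Q assume "P \<in> partitions_in F" "Q \<in> partitions_in F"
    then obtain R where "R \<in> partitions_in F" "cost (\<lambda>k. x k + y k) R \<le> 2 * cost x P + 2 * cost y Q"
      using cost_tri[OF her(1)] by blast
    then show "Fnorm F (\<lambda>k. x k + y k) \<le> 2 * cost x P + 2 * cost y Q"
      unfolding Fnorm_cost by (meson INF_lower order_trans)
  qed
  also have "\<dots> = ennreal 2 * (Fnorm F x + Fnorm F y)"
    unfolding Fnorm_cost distrib_left using mult_INF_ennreal[OF _ ne, of 2] by simp
  finally show ?thesis .
qed



lemma monoseq_bool_ev:
  assumes m: "monoseq (g::nat \<Rightarrow> bool)"
  shows "\<exists>b. eventually (\<lambda>t. g t = b) sequentially"
proof -
  consider (inc) "\<forall>m n. m \<le> n \<longrightarrow> g m \<le> g n" | (dec) "\<forall>m n. m \<le> n \<longrightarrow> g n \<le> g m"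
    using m unfolding monoseq_def by blast
  then show ?thesis
  proof cases
    case inc
    show ?thesis
    proof (cases "\<exists>N. g N")
      case True
      then obtain N where "g N" by blast
      then have "\<forall>t\<ge>N. g t = True" using inc by (auto simp: le_bool_def)
      then show ?thesis unfolding eventually_sequentially by blast
    next
      case False then show ?thesis by (intro exI[of _ False]) auto
    qed
  next
    case dec
    show ?thesis
    proof (cases "\<exists>N. \<not> g N")
      case True
      then obtain N where "\<not> g N" by blast
      then have "\<forall>t\<ge>N. g t = False" using dec by (auto simp: le_bool_def)
      then show ?thesis unfolding eventually_sequentially by blast
    next
      case False then show ?thesis by (intro exI[of _ True]) auto
    qed
  qed
qed

lemma diag_bool:
  fixes r :: "nat \<Rightarrow> nat \<Rightarrow> nat \<Rightarrow> bool"
  shows "\<exists>\<sigma>. strict_mono \<sigma> \<and> (\<forall>i j. \<exists>b. eventually (\<lambda>t. r (\<sigma> t) i j = b) sequentially)"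
proof -
  define Pr where "Pr k s \<longleftrightarrow> (\<exists>b. eventually (\<lambda>t. r (s t) (fst (prod_decode k)) (snd (prod_decode k)) = b) sequentially)"
    for k and s :: "nat \<Rightarrow> nat"
  interpret subseqs Pr
  proof
    fix k and s :: "nat \<Rightarrow> nat" assume "strict_mono s"
    obtain f where f: "strict_mono f" "monoseq (\<lambda>n. r (s (f n)) (fst (prod_decode k)) (snd (prod_decode k)))"
      using seq_monosub[of "\<lambda>t. r (s t) (fst (prod_decode k)) (snd (prod_decode k))"] by (elim exE conjE) (rule that)
    have "Pr k (s \<circ> f)" unfolding Pr_def o_def by (rule monoseq_bool_ev[OF f(2)])
    then show "\<exists>r'. strict_mono r' \<and> Pr k (s \<circ> r')" using f by blast
  qed
  have st: "Pr k (diagseq \<circ> (+) (Suc k))" for k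
  proof (rule diagseq_holds)
    fix r' s n assume "strict_mono (r'::nat\<Rightarrow>nat)" "Pr n s"
    then show "Pr n (s \<circ> r')" unfolding Pr_def o_def using eventually_subseq by blast
  qed
  have "\<exists>b. eventually (\<lambda>t. r (diagseq t) i j = b) sequentially" for i j
  proof -
    define k where "k = prod_encode (i, j)"
    obtain b where "eventually (\<lambda>t. r (diagseq (Suc k + t)) i j = b) sequentially"
      using st[of k] unfolding Pr_def k_def by auto
    then have "eventually (\<lambda>t. r (diagseq (t + Suc k)) i j = b) sequentially"
      by (simp add: add.commute)
    then show ?thesis
      using eventually_sequentially_seg[of "\<lambda>t. r (diagseq t) i j = b" "Suc k"] by blast
  qed
  then show ?thesis using subseq_diagseq by blast
qed

lemma ev_ex: "eventually P sequentially \<Longrightarrow> \<exists>t. P t"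
  by (auto simp: eventually_sequentially)



lemma Fnorm_lsc:
  assumes cF: "compact_family F" and her: "hereditary F" and cov: "covers F"
  shows "Fnorm F x \<le> (SUP n. Fnorm F (projn n x))"
proof (rule dense_ge)
  fix M' assume M': "(SUP n. Fnorm F (projn n x)) < M'"
  have "\<forall>n. \<exists>P\<in>partitions_in F. cost (projn n x) P < M'"
  proof
    fix n
    have "Fnorm F (projn n x) \<le> (SUP n. Fnorm F (projn n x))" by (rule SUP_upper) simp
    then have "Fnorm F (projn n x) < M'" using M' by (rule le_less_trans)
    then show "\<exists>P\<in>partitions_in F. cost (projn n x) P < M'" unfolding Fnorm_cost by (simp add: INF_less_iff)
  qed
  then obtain Pn where Pn: "\<And>n. Pn n \<in> partitions_in F" "\<And>n. cost (projn n x) (Pn n) < M'" by metis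
  have Pn_cov: "\<exists>B\<in>Pn n. i \<in> B" for n i
  proof -
    have "\<Union>(Pn n) = UNIV" using Pn(1)[of n] unfolding partitions_in_def is_partition_def by simp
    then have "i \<in> \<Union>(Pn n)" by simp
    then show ?thesis by blast
  qed
  have Pn_uniq: "B = B'" if "B \<in> Pn n" "B' \<in> Pn n" "i \<in> B" "i \<in> B'" for n i B B'
  proof (rule ccontr)
    assume "B \<noteq> B'"
    then have "B \<inter> B' = {}" using Pn(1)[of n] that unfolding partitions_in_def is_partition_def by blast
    then show False using that by blast
  qed
  have PnF: "Pn n \<subseteq> F" for n using Pn(1)[of n] unfolding partitions_in_def by simp
  define r where "r n i j = (\<exists>B\<in>Pn n. i \<in> B \<and> j \<in> B)" for n i j
  have r_refl: "r n i i" for n i unfolding r_def using Pn_cov by blast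
  have r_sym: "r n i j \<Longrightarrow> r n j i" for n i j unfolding r_def by blast
  have r_mem: "B \<in> Pn n \<Longrightarrow> i \<in> B \<Longrightarrow> r n i j \<Longrightarrow> j \<in> B" for n i j B
    unfolding r_def using Pn_uniq by blast
  have r_trans: "r n i j \<Longrightarrow> r n j k \<Longrightarrow> r n i k" for n i j k
  proof -
    assume "r n i j" "r n j k"
    then obtain B where B: "B \<in> Pn n" "i \<in> B" "j \<in> B" unfolding r_def by blast
    then have "k \<in> B" using r_mem \<open>r n j k\<close> by blast
    then show "r n i k" using B unfolding r_def by blast
  qed
  obtain \<sigma> where \<sigma>: "strict_mono \<sigma>" "\<And>i j. \<exists>b. eventually (\<lambda>t. r (\<sigma> t) i j = b) sequentially"
    using diag_bool[of r] by blast
  define R where "R i j = (SOME b. eventually (\<lambda>t. r (\<sigma> t) i j = b) sequentially)" for i j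
  have evR: "eventually (\<lambda>t. r (\<sigma> t) i j = R i j) sequentially" for i j
    unfolding R_def using \<sigma>(2)[of i j] by (rule someI_ex)
  have R_refl: "R i i" for i
  proof -
    obtain t where "r (\<sigma> t) i i = R i i" using ev_ex[OF evR[of i i]] by blast
    then show ?thesis using r_refl by simp
  qed
  have R_sym: "R j i" if "R i j" for i j
  proof -
    obtain t where "r (\<sigma> t) i j = R i j" "r (\<sigma> t) j i = R j i"
      using ev_ex[OF eventually_conj[OF evR[of i j] evR[of j i]]] by blast
    then show ?thesis using r_sym that by blast
  qed
  have R_trans: "R i k" if "R i j" "R j k" for i j k
  proof -
    obtain t where "r (\<sigma> t) i j = R i j" "r (\<sigma> t) j k = R j k" "r (\<sigma> t) i k = R i k"
      using ev_ex[OF eventually_conj[OF evR[of i j] eventually_conj[OF evR[of j k] evR[of i k]]]] by blast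
    then show ?thesis using r_trans that by blast
  qed
  define C where "C i = {j. R i j}" for i
  have C_eq: "C i = C j" if "R i j" for i j
    unfolding C_def using R_sym R_trans that by blast
  have C_F: "C i \<in> F" for i
  proof (rule closed_F[OF cF])
    fix m
    have "eventually (\<lambda>t. \<forall>j\<in>{..<m}. r (\<sigma> t) i j = R i j) sequentially"
      by (rule eventually_ball_finite) (auto intro: evR)
    then obtain t where t: "\<forall>j\<in>{..<m}. r (\<sigma> t) i j = R i j" using ev_ex by blast
    obtain B where B: "B \<in> Pn (\<sigma> t)" "i \<in> B" using Pn_cov by blast
    have "C i \<inter> {..<m} \<subseteq> B" using t r_mem[OF B] unfolding C_def by auto
    moreover have "B \<in> F" using PnF B(1) by blast
    ultimately show "C i \<inter> {..<m} \<in> F" using her unfolding hereditary_def by blast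
  qed
  have "{} \<in> Pn 0" using Pn(1)[of 0] by (simp add: partitions_in_def is_partition_def)
  then have emptyF: "{} \<in> F" using PnF[of 0] by blast
  define Q where "Q = insert {} (range C)"
  have Q_part: "Q \<in> partitions_in F"
    unfolding partitions_in_def is_partition_def mem_Collect_eq Q_def
  proof (intro conjI ballI impI)
    show "{} \<in> insert {} (range C)" by simp
    show "\<Union>(insert {} (range C)) = UNIV" using R_refl unfolding C_def by auto
    show "insert {} (range C) \<subseteq> F" using emptyF C_F by auto
    fix A B assume AB: "A \<in> insert {} (range C)" "B \<in> insert {} (range C)" "A \<noteq> B"
    show "A \<inter> B = {}"
    proof (rule ccontr)
      assume "A \<inter> B \<noteq> {}"
      then obtain j where j: "j \<in> A" "j \<in> B" by blast
      then obtain i i' where "A = C i" "B = C i'" using AB by auto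
      then have "A = C j" "B = C j" using j C_eq unfolding C_def by auto
      then show False using AB by simp
    qed
  qed
  have "Fnorm F x \<le> cost x Q" unfolding Fnorm_cost using Q_part by (rule INF_lower)
  also have "cost x Q \<le> M'"
    unfolding cost_def
  proof (rule infsum_le_ennreal)
    fix G assume G: "finite G" "G \<subseteq> Q"
    define fm where "fm m A = (SUP k\<in>A\<inter>{..<m}. ennreal \<bar>x k\<bar>)" for m A
    have f_eq: "(SUP k\<in>A. ennreal \<bar>x k\<bar>) = (SUP m. fm m A)" for A
    proof -
      have "A = (\<Union>m. A \<inter> {..<m})" by auto
      then have "(SUP k\<in>A. ennreal \<bar>x k\<bar>) = (SUP k\<in>(\<Union>m. A \<inter> {..<m}). ennreal \<bar>x k\<bar>)"
        by (rule arg_cong)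
      also have "\<dots> = (SUP m. fm m A)" unfolding fm_def by (rule SUP_UNION)
      finally show ?thesis .
    qed
    have inc: "incseq (\<lambda>m. fm m A)" for A
      unfolding fm_def incseq_def by (auto intro!: SUP_subset_mono)
    have "(\<Sum>A\<in>G. SUP k\<in>A. ennreal \<bar>x k\<bar>) = (SUP m. \<Sum>A\<in>G. fm m A)"
      unfolding f_eq by (rule ennreal_SUP_sum[symmetric]) (rule inc)
    also have "\<dots> \<le> M'"
    proof (rule SUP_least)
      fix m
      define G' where "G' = {A\<in>G. A \<inter> {..<m} \<noteq> {}}"
      have "(\<Sum>A\<in>G. fm m A) = (\<Sum>A\<in>G'. fm m A)"
        using G by (intro sum.mono_neutral_right) (auto simp: G'_def fm_def bot_ennreal)
      have G'C: "\<exists>i. A = C i" if "A \<in> G'" for A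
        using that G unfolding G'_def Q_def by auto
      define \<rho> where "\<rho> A = (SOME j. j \<in> A \<inter> {..<m})" for A
      have \<rho>: "\<rho> A \<in> A \<and> \<rho> A < m" if "A \<in> G'" for A
      proof -
        have "\<exists>j. j \<in> A \<inter> {..<m}" using that unfolding G'_def by blast
        then have "\<rho> A \<in> A \<inter> {..<m}" unfolding \<rho>_def by (rule someI_ex)
        then show ?thesis by simp
      qed
      have AC: "A = C (\<rho> A)" if AG: "A \<in> G'" for A
      proof -
        obtain i where i: "A = C i" using G'C[OF AG] by blast
        then have "R i (\<rho> A)" using \<rho>[OF AG] unfolding C_def by auto
        then have "C i = C (\<rho> A)" by (rule C_eq)
        then show ?thesis using i by simp
      qed
      have "eventually (\<lambda>t. m \<le> t \<and> (\<forall>p\<in>{..<m}\<times>{..<m}. r (\<sigma> t) (fst p) (snd p) = R (fst p) (snd p))) sequentially"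
        by (intro eventually_conj eventually_ball_finite) (auto simp: eventually_ge_at_top intro: evR)
      then obtain t where t: "m \<le> t" "\<forall>p\<in>{..<m}\<times>{..<m}. r (\<sigma> t) (fst p) (snd p) = R (fst p) (snd p)"
        using ev_ex by blast
      have tR: "r (\<sigma> t) i j = R i j" if "i < m" "j < m" for i j using t(2) that by auto
      define n where "n = \<sigma> t"
      have mn: "m \<le> n" unfolding n_def using seq_suble[OF \<sigma>(1), of t] t(1) by simp
      define blk where "blk i = (SOME B. B \<in> Pn n \<and> i \<in> B)" for i
      have blk: "blk i \<in> Pn n \<and> i \<in> blk i" for i
      proof -
        have "\<exists>B. B \<in> Pn n \<and> i \<in> B" using Pn_cov[of n i] by blast
        then show ?thesis unfolding blk_def by (rule someI_ex)
      qed
      define \<phi> where "\<phi> A = blk (\<rho> A)" for A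
      have sub: "A \<inter> {..<m} \<subseteq> \<phi> A" if "A \<in> G'" for A
      proof
        fix j assume j: "j \<in> A \<inter> {..<m}"
        then have "R (\<rho> A) j" using AC[OF that] unfolding C_def by auto
        then have "r n (\<rho> A) j" using tR[of "\<rho> A" j] \<rho>[OF that] j unfolding n_def by simp
        then show "j \<in> \<phi> A" unfolding \<phi>_def using r_mem blk by blast
      qed
      have inj: "inj_on \<phi> G'"
      proof (rule inj_onI)
        fix A A' assume A: "A \<in> G'" "A' \<in> G'" "\<phi> A = \<phi> A'"
        have "r n (\<rho> A) (\<rho> A')" unfolding r_def using blk[of "\<rho> A"] blk[of "\<rho> A'"] A(3)
          unfolding \<phi>_def by metis
        then have "R (\<rho> A) (\<rho> A')" using tR \<rho>[OF A(1)] \<rho>[OF A(2)] unfolding n_def by simp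
        then show "A = A'" using AC[OF A(1)] AC[OF A(2)] C_eq by metis
      qed
      let ?g = "\<lambda>B. SUP k\<in>B. ennreal \<bar>projn n x k\<bar>"
      have "(\<Sum>A\<in>G. fm m A) = (\<Sum>A\<in>G'. fm m A)" by fact
      also have "\<dots> \<le> (\<Sum>A\<in>G'. ?g (\<phi> A))"
      proof (rule sum_mono)
        fix A assume A: "A \<in> G'"
        show "fm m A \<le> ?g (\<phi> A)" unfolding fm_def
        proof (rule SUP_mono)
          fix k assume k: "k \<in> A \<inter> {..<m}"
          then have "k \<in> \<phi> A" using sub[OF A] by blast
          moreover have "projn n x k = x k" using k mn unfolding projn_def proj_def by auto
          ultimately show "\<exists>k'\<in>\<phi> A. ennreal \<bar>x k\<bar> \<le> ennreal \<bar>projn n x k'\<bar>"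
            by (intro bexI[of _ k]) auto
        qed
      qed
      also have "\<dots> = sum ?g (\<phi> ` G')" using inj by (simp add: sum.reindex)
      also have "\<dots> \<le> cost (projn n x) (Pn n)"
        unfolding cost_def using G blk by (intro sum_le_infsum_ennreal) (auto simp: G'_def \<phi>_def)
      also have "\<dots> \<le> M'" using Pn(2)[of n] by simp
      finally show "(\<Sum>A\<in>G. fm m A) \<le> M'" .
    qed
    finally show "(\<Sum>A\<in>G. SUP k\<in>A. ennreal \<bar>x k\<bar>) \<le> M'" .
  qed
  finally show "Fnorm F x \<le> M'" .
qed



lemma Fnorm_lim:
  assumes "compact_family F" "hereditary F" "covers F"
  shows "(\<lambda>n. Fnorm F (projn n x)) \<longlonglongrightarrow> Fnorm F x"
proof -
  have inc: "incseq (\<lambda>n. Fnorm F (projn n x))"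
    unfolding incseq_def by (intro allI impI Fnorm_mono) (auto simp: projn_def proj_def)
  have "(SUP n. Fnorm F (projn n x)) = Fnorm F x"
  proof (rule antisym)
    show "(SUP n. Fnorm F (projn n x)) \<le> Fnorm F x"
      by (intro SUP_least Fnorm_mono) (auto simp: projn_def proj_def)
    show "Fnorm F x \<le> (SUP n. Fnorm F (projn n x))" by (rule Fnorm_lsc[OF assms])
  qed
  then show ?thesis using LIMSEQ_SUP[OF inc] by simp
qed

theorem mainTheorem2:
  fixes \<F> :: "nat set set"
  assumes "compact_family \<F>" and "hereditary \<F>" and "covers \<F>"
  shows "nice (Fnorm \<F>) \<and> ext_quasi_norm (Fnorm \<F>) \<and>
         (\<forall>x. (\<lambda>n. Fnorm \<F> (projn n x)) \<longlonglongrightarrow> Fnorm \<F> x)"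
proof -
  have lim: "\<forall>x. (\<lambda>n. Fnorm \<F> (projn n x)) \<longlonglongrightarrow> Fnorm \<F> x"
    using Fnorm_lim[OF assms] by blast
  have fin: "Fnorm \<F> x < \<infinity>" if "finite {k. x k \<noteq> 0}" for x
  proof -
    have "Fnorm \<F> x \<le> cost x S0" unfolding Fnorm_cost
      using S0_part[OF assms(2,3)] by (rule INF_lower)
    then show ?thesis using cost_S0_finite[OF that] by (rule le_less_trans)
  qed
  have "nice (Fnorm \<F>)" unfolding nice_def using fin Fnorm_mono lim by blast
  moreover have "ext_quasi_norm (Fnorm \<F>)" unfolding ext_quasi_norm_def
  proof (intro conjI allI)
    fix x show "Fnorm \<F> x = 0 \<longleftrightarrow> x = (\<lambda>_. 0)" by (rule Fnorm_zero_iff[OF assms(2,3)])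
  next
    fix l :: real and x
    show "Fnorm \<F> (\<lambda>k. l * x k) = ennreal \<bar>l\<bar> * Fnorm \<F> x" by (rule Fnorm_scale[OF assms(2,3)])
  next
    show "\<exists>c::real. c \<ge> 1 \<and> (\<forall>x y. Fnorm \<F> (\<lambda>k. x k + y k) \<le> ennreal c * (Fnorm \<F> x + Fnorm \<F> y))"
      using Fnorm_tri[OF assms(2,3)] by (intro exI[of _ 2]) auto
  qed
  ultimately show ?thesis using lim by blast
qed


end
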